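(* Let $n\ge1$, $R_0,R_1\in SO(n)$ and $h>0$. For each $t\in[0,h]$ let $A(t)=\frac{h-t}{h}R_0+\frac{t}{h}R_1$, and assume $A(t)$ is nonsingular for all $t\in[0,h]$. Let $A(t)=Q(t)Y(t)$ be the polar decomposition of $A(t)$, with $Q(t)$ orthogonal and $Y(t)$ symmetric positive definite. Then for $t\in[0,h]$, \[\dot Y(t)=Y(t)\,\mathrm{sym}\big(A(t)^{-1}\dot A(t)\big),\qquad \dot Q(t)=Q(t)\,\mathrm{skew}\big(A(t)^{-1}\dot A(t)\big).\]
   Context: $SO(n)=\{Q\in\mathbb{R}^{n\times n}:Q^TQ=I,\ \det Q>0\}$. For a square matrix $B$, $\mathrm{sym}(B)=\frac12(B+B^T)$ and $\mathrm{skew}(B)=\frac12(B-B^T)$. Overdots denote derivatives with respect to $t$. *)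

theory Defs
  imports "HOL-Analysis.Analysis"
begin

definition SO :: "(real^'n^'n) set" where
  "SO = {Q. orthogonal_matrix Q \<and> det Q > 0}"

definition msym :: "real^'n^'n \<Rightarrow> real^'n^'n" where
  "msym B = (1/2) *\<^sub>R (B + transpose B)"

definition mskew :: "real^'n^'n \<Rightarrow> real^'n^'n" where
  "mskew B = (1/2) *\<^sub>R (B - transpose B)"

definition spd :: "real^'n^'n \<Rightarrow> bool" where
  "spd Y \<longleftrightarrow> transpose Y = Y \<and> (\<forall>x. x \<noteq> 0 \<longrightarrow> 0 < x \<bullet> (Y *v x))"

end

theory Submission
  imports Defs
begin


lemma mm_add_r: "((A::real^'n^'n) + B) ** C = A ** C + B ** C"
  by (simp add: matrix_matrix_mult_def vec_eq_iff algebra_simps sum.distrib)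
lemma mm_add_l: "(A::real^'n^'n) ** (B + C) = A ** B + A ** C"
  by (simp add: matrix_matrix_mult_def vec_eq_iff algebra_simps sum.distrib)
lemma mm_diff_r: "((A::real^'n^'n) - B) ** C = A ** C - B ** C"
  by (simp add: matrix_matrix_mult_def vec_eq_iff algebra_simps sum_subtractf)
lemma mm_diff_l: "(A::real^'n^'n) ** (B - C) = A ** B - A ** C"
  by (simp add: matrix_matrix_mult_def vec_eq_iff algebra_simps sum_subtractf)
lemma mm_scale_l: "((k::real) *\<^sub>R (A::real^'n^'n)) ** B = k *\<^sub>R (A ** B)"
  by (simp add: matrix_matrix_mult_def vec_eq_iff sum_distrib_left mult_ac)
lemma mm_scale_r: "(A::real^'n^'n) ** ((k::real) *\<^sub>R B) = k *\<^sub>R (A ** B)"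
  by (simp add: matrix_matrix_mult_def vec_eq_iff sum_distrib_left mult_ac)
lemma mm_neg_l: "(- (A::real^'n^'n)) ** B = - (A ** B)"
  by (simp add: matrix_matrix_mult_def vec_eq_iff sum_negf)
lemma mm_neg_r: "(A::real^'n^'n) ** (- B) = - (A ** B)"
  by (simp add: matrix_matrix_mult_def vec_eq_iff sum_negf)
lemma tr_add: "transpose ((A::real^'n^'n) + B) = transpose A + transpose B"
  by (simp add: transpose_def vec_eq_iff)
lemma tr_diff: "transpose ((A::real^'n^'n) - B) = transpose A - transpose B"
  by (simp add: transpose_def vec_eq_iff)
lemma tr_neg: "transpose (- (A::real^'n^'n)) = - transpose A"
  by (simp add: transpose_def vec_eq_iff)

lemmas mm_simps = mm_add_r mm_add_l mm_diff_r mm_diff_l mm_scale_l mm_scale_r mm_neg_l mm_neg_r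
  tr_add tr_diff tr_neg transpose_scalar matrix_transpose_mul

lemma mm_bb: "bounded_bilinear ((**) :: real^'n^'n \<Rightarrow> real^'n^'n \<Rightarrow> real^'n^'n)"
  unfolding bilinear_conv_bounded_bilinear[symmetric] bilinear_def
  by (auto intro!: linearI simp: mm_simps)

lemma mm_bound: "\<exists>K>0. \<forall>(A::real^'n^'n) (B::real^'n^'n). norm (A ** B) \<le> norm A * norm B * K"
  using bounded_bilinear.pos_bounded[OF mm_bb] by blast

lemma inv_props: assumes "invertible (A::real^'n^'n)"
  shows "A ** matrix_inv A = mat 1" "matrix_inv A ** A = mat 1"
  using someI_ex[OF assms[unfolded invertible_def]] unfolding matrix_inv_def by auto

lemma key:
  fixes Y1 Y2 E :: "real^'n^'n"
  assumes "\<And>x. 0 \<le> x \<bullet> (Y1 *v x)" "\<And>x. c * (norm x)^2 \<le> x \<bullet> (Y2 *v x)"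
    and "transpose Y2 = Y2"
  shows "c * (norm E)^2 \<le> E \<bullet> (Y1 ** E + E ** Y2)"
proof -
  have "E \<bullet> (Y1 ** E) = (\<Sum>i\<in>UNIV. \<Sum>j\<in>UNIV. E$i$j * (\<Sum>k\<in>UNIV. Y1$i$k * E$k$j))"
    by (simp add: inner_vec_def matrix_matrix_mult_def)
  also have "\<dots> = (\<Sum>j\<in>UNIV. \<Sum>i\<in>UNIV. E$i$j * (\<Sum>k\<in>UNIV. Y1$i$k * E$k$j))"
    by (rule sum.swap)
  also have "\<dots> = (\<Sum>j\<in>UNIV. column j E \<bullet> (Y1 *v column j E))"
    by (simp add: inner_vec_def matrix_vector_mult_def column_def)
  finally have 1: "E \<bullet> (Y1 ** E) = (\<Sum>j\<in>UNIV. column j E \<bullet> (Y1 *v column j E))" .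
  have 2: "E \<bullet> (E ** Y2) = (\<Sum>i\<in>UNIV. E$i \<bullet> (Y2 *v E$i))"
  proof -
    have s: "Y2 $ j $ k = Y2 $ k $ j" for j k
      using assms(3) by (metis transpose_def vec_lambda_beta)
    show ?thesis
      by (simp add: inner_vec_def matrix_matrix_mult_def matrix_vector_mult_def sum_distrib_left s mult_ac)
  qed
  have 3: "c * (norm E)^2 = (\<Sum>i\<in>UNIV. c * (norm (E$i))^2)"
    by (simp add: power2_norm_eq_inner inner_vec_def sum_distrib_left)
  have "E \<bullet> (Y1 ** E) \<ge> 0" unfolding 1 by (rule sum_nonneg) (use assms(1) in auto)
  moreover have "c * (norm E)^2 \<le> E \<bullet> (E ** Y2)" unfolding 2 3
    by (rule sum_mono) (use assms(2) in auto)
  ultimately show ?thesis by (simp add: inner_add_right)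
qed

lemma key_norm:
  fixes Y1 Y2 E :: "real^'n^'n"
  assumes "\<And>x. 0 \<le> x \<bullet> (Y1 *v x)" "\<And>x. c * (norm x)^2 \<le> x \<bullet> (Y2 *v x)"
    and "transpose Y2 = Y2"
  shows "c * norm E \<le> norm (Y1 ** E + E ** Y2)"
proof (cases "E = 0")
  case True then show ?thesis by simp
next
  case False
  have "c * (norm E)^2 \<le> norm E * norm (Y1 ** E + E ** Y2)"
    using key[OF assms, of E] norm_cauchy_schwarz[of E "Y1 ** E + E ** Y2"] by linarith
  then show ?thesis using False by (simp add: power2_eq_square)
qed


lemma pd_bound:
  fixes Y :: "real^'n^'n"
  assumes "spd Y"
  shows "\<exists>c>0. \<forall>x. c * (norm x)^2 \<le> x \<bullet> (Y *v x)"
proof -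
  let ?f = "\<lambda>x::real^'n. x \<bullet> (Y *v x)"
  have cont: "continuous_on (sphere 0 1) ?f"
    by (intro continuous_on_inner continuous_on_id linear_continuous_on_compose[OF continuous_on_id]) simp
  have ne: "sphere (0::real^'n) 1 \<noteq> {}" by simp
  obtain x0 where x0: "x0 \<in> sphere 0 1" "\<forall>y\<in>sphere 0 1. ?f x0 \<le> ?f y"
    using continuous_attains_inf[OF compact_sphere ne cont] by blast
  have "x0 \<noteq> 0" using x0(1) by auto
  then have pos: "?f x0 > 0" using assms unfolding spd_def by blast
  have "?f x0 * (norm x)^2 \<le> ?f x" for x
  proof (cases "x = 0")
    case True then show ?thesis by simp
  next
    case False
    define u where "u = (1 / norm x) *\<^sub>R x"
    have u: "u \<in> sphere 0 1" using False by (simp add: u_def)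
    have xu: "x = norm x *\<^sub>R u" using False by (simp add: u_def)
    have "?f x = (norm x)^2 * ?f u"
      by (subst xu, subst xu) (simp add: matrix_vector_mult_scaleR power2_eq_square)
    moreover have "?f x0 \<le> ?f u" using x0(2) u by blast
    ultimately show ?thesis by (metis mult.commute mult_right_mono zero_le_power2)
  qed
  then show ?thesis using pos by blast
qed

lemma spd_psd: "spd Y \<Longrightarrow> 0 \<le> x \<bullet> (Y *v x)"
  unfolding spd_def by (cases "x = 0") (auto intro: less_imp_le)

lemma sqrt_unique:
  fixes Y1 Y2 :: "real^'n^'n"
  assumes "spd Y1" "spd Y2" "Y1 ** Y1 = Y2 ** Y2"
  shows "Y1 = Y2"
proof -
  obtain c where c: "c > 0" "\<And>x. c * (norm x)^2 \<le> x \<bullet> (Y2 *v x)"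
    using pd_bound[OF assms(2)] by blast
  have "c * norm (Y1 - Y2) \<le> norm (Y1 ** (Y1 - Y2) + (Y1 - Y2) ** Y2)"
    by (rule key_norm) (use spd_psd[OF assms(1)] c assms(2) in \<open>auto simp: spd_def\<close>)
  also have "Y1 ** (Y1 - Y2) + (Y1 - Y2) ** Y2 = 0"
    using assms(3) by (simp add: mm_simps)
  finally show ?thesis using c(1)
    by (simp add: mult_le_0_iff)
qed

lemma deriv_from_bound:
  fixes f :: "real \<Rightarrow> 'a::real_normed_vector"
  assumes "d > 0" "\<forall>s\<in>S. \<bar>s - t\<bar> < d \<longrightarrow> norm (f s - f t - (s - t) *\<^sub>R z) \<le> C * (s - t)^2"
  shows "(f has_vector_derivative z) (at t within S)"
  unfolding has_vector_derivative_def has_derivative_within_alt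
proof (intro conjI allI impI)
  show "bounded_linear (\<lambda>x. x *\<^sub>R z)" by (rule bounded_linear_scaleR_left)
  fix e :: real assume e: "e > 0"
  define d' where "d' = min d (e / (\<bar>C\<bar> + 1))"
  have d': "d' > 0" using e assms(1) by (simp add: d'_def)
  have "norm (f y - f t - (y - t) *\<^sub>R z) \<le> e * norm (y - t)" if "y \<in> S" "norm (y - t) < d'" for y
  proof -
    have lt: "\<bar>y - t\<bar> < d" "\<bar>y - t\<bar> < e / (\<bar>C\<bar> + 1)" using that by (auto simp: d'_def)
    have "norm (f y - f t - (y - t) *\<^sub>R z) \<le> C * (y - t)^2" using assms(2) that(1) lt(1) by blast
    also have "\<dots> \<le> \<bar>C\<bar> * \<bar>y - t\<bar> * \<bar>y - t\<bar>" by (simp add: power2_eq_square abs_mult[symmetric])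
    also have "\<dots> \<le> (\<bar>C\<bar> + 1) * \<bar>y - t\<bar> * \<bar>y - t\<bar>" by (simp add: mult_right_mono)
    also have "\<dots> \<le> e * \<bar>y - t\<bar>"
    proof -
      have "(\<bar>C\<bar> + 1) * \<bar>y - t\<bar> \<le> e" using lt(2) by (simp add: pos_less_divide_eq mult.commute less_imp_le)
      then show ?thesis by (simp add: mult_right_mono)
    qed
    finally show ?thesis by simp
  qed
  then show "\<exists>d>0. \<forall>y\<in>S. norm (y - t) < d \<longrightarrow> norm (f y - f t - (y - t) *\<^sub>R z) \<le> e * norm (y - t)"
    using d' by blast
qed


lemma Y_core:
  fixes Yf :: "real \<Rightarrow> real^'n^'n" and Z Gd P :: "real^'n^'n"
  assumes spd: "\<forall>s\<in>S. spd (Yf s)" and tS: "t \<in> S"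
    and sq: "\<forall>s\<in>S. Yf s ** Yf s = Yf t ** Yf t + (s - t) *\<^sub>R Gd + (s - t)^2 *\<^sub>R P"
    and lin: "Yf t ** Z + Z ** Yf t = Gd"
    and bnd: "\<forall>s\<in>S. \<bar>s - t\<bar> \<le> H"
  shows "\<exists>C1 C2. \<forall>s\<in>S. norm (Yf s - Yf t) \<le> C1 * \<bar>s - t\<bar>
            \<and> norm (Yf s - Yf t - (s - t) *\<^sub>R Z) \<le> C2 * (s - t)^2"
proof -
  have spdt: "spd (Yf t)" using spd tS by blast
  obtain c where c: "c > 0" "\<And>x. c * (norm x)^2 \<le> x \<bullet> (Yf t *v x)"
    using pd_bound[OF spdt] by blast
  have symt: "transpose (Yf t) = Yf t" using spdt by (simp add: spd_def)
  obtain B where B: "B > 0" "\<And>(X::real^'n^'n) (Y::real^'n^'n). norm (X ** Y) \<le> norm X * norm Y * B"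
    using mm_bound by blast
  define C1 where "C1 = (norm Gd + H * norm P) / c"
  define C2 where "C2 = (norm P + C1 * norm Z * B) / c"
  have "norm (Yf s - Yf t) \<le> C1 * \<bar>s - t\<bar> \<and> norm (Yf s - Yf t - (s - t) *\<^sub>R Z) \<le> C2 * (s - t)^2"
    if s: "s \<in> S" for s
  proof -
    define e where "e = s - t"
    define D where "D = Yf s - Yf t"
    have psd: "\<And>x. 0 \<le> x \<bullet> (Yf s *v x)" using spd s spd_psd by blast
    have He: "\<bar>e\<bar> \<le> H" using bnd s by (simp add: e_def)
    have sqs: "Yf s ** Yf s = Yf t ** Yf t + e *\<^sub>R Gd + e^2 *\<^sub>R P" using sq s by (simp add: e_def)
    have eqD: "Yf s ** D + D ** Yf t = e *\<^sub>R Gd + e^2 *\<^sub>R P"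
      using sqs by (simp add: D_def mm_simps)
    have "c * norm D \<le> norm (Yf s ** D + D ** Yf t)"
      by (rule key_norm[OF psd c(2) symt])
    also have "\<dots> \<le> \<bar>e\<bar> * norm Gd + e^2 * norm P"
      unfolding eqD by (rule order_trans[OF norm_triangle_ineq]) simp
    also have "\<dots> \<le> \<bar>e\<bar> * norm Gd + \<bar>e\<bar> * H * norm P"
    proof -
      have "e^2 \<le> \<bar>e\<bar> * H" using He by (simp add: power2_eq_square) (metis abs_ge_zero abs_mult_self_eq mult_left_mono)
      then show ?thesis by (simp add: mult_right_mono)
    qed
    finally have cD: "c * norm D \<le> \<bar>e\<bar> * (norm Gd + H * norm P)" by (simp add: algebra_simps)
    then have D1: "norm D \<le> C1 * \<bar>e\<bar>" using c(1)
      by (simp add: C1_def pos_le_divide_eq mult.commute mult.left_commute)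
    define E where "E = D - e *\<^sub>R Z"
    have eqE: "Yf s ** E + E ** Yf t = e^2 *\<^sub>R P - e *\<^sub>R (D ** Z)"
    proof -
      have "Yf s ** E + E ** Yf t = (Yf s ** D + D ** Yf t) - e *\<^sub>R (Yf s ** Z + Z ** Yf t)"
        by (simp add: E_def mm_simps algebra_simps)
      also have "Yf s ** Z = Yf t ** Z + D ** Z" by (simp add: D_def mm_simps)
      also have "Yf t ** Z + D ** Z + Z ** Yf t = Gd + D ** Z" using lin by (simp add: algebra_simps)
      finally show ?thesis unfolding eqD by (simp add: algebra_simps)
    qed
    have "c * norm E \<le> norm (Yf s ** E + E ** Yf t)"
      by (rule key_norm[OF psd c(2) symt])
    also have "\<dots> \<le> e^2 * norm P + \<bar>e\<bar> * (norm D * norm Z * B)"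
      unfolding eqE by (rule order_trans[OF norm_triangle_ineq4]) (simp add: mult_left_mono[OF B(2)])
    also have "\<dots> \<le> e^2 * norm P + \<bar>e\<bar> * (C1 * \<bar>e\<bar> * norm Z * B)"
      using D1 B(1) by (simp add: mult_left_mono mult_right_mono)
    also have "\<dots> = e^2 * (norm P + C1 * norm Z * B)"
      by (simp add: power2_eq_square algebra_simps abs_mult_self_eq)
    finally have "norm E \<le> C2 * e^2" using c(1)
      by (simp add: C2_def pos_le_divide_eq mult.commute mult.left_commute)
    then show ?thesis using D1 by (simp add: E_def D_def e_def)
  qed
  then show ?thesis by blast
qed

lemma Q_core:
  fixes Yf Qf :: "real \<Rightarrow> real^'n^'n" and Z W A0 Ad :: "real^'n^'n"
  assumes spdt: "spd (Yf t)"
    and QY: "\<forall>s\<in>S. Qf s ** Yf s = A0 + (s - t) *\<^sub>R Ad" and QYt: "Qf t ** Yf t = A0"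
    and Ad: "Ad = Qf t ** Z + W ** Yf t"
    and D1: "\<forall>s\<in>S. norm (Yf s - Yf t) \<le> C1 * \<bar>s - t\<bar>"
    and E2: "\<forall>s\<in>S. norm (Yf s - Yf t - (s - t) *\<^sub>R Z) \<le> C2 * (s - t)^2"
  shows "\<exists>C3 d. d > 0 \<and> (\<forall>s\<in>S. \<bar>s - t\<bar> < d \<longrightarrow> norm (Qf s - Qf t - (s - t) *\<^sub>R W) \<le> C3 * (s - t)^2)"
proof -
  obtain c where c: "c > 0" "\<And>x. c * (norm x)^2 \<le> x \<bullet> (Yf t *v x)"
    using pd_bound[OF spdt] by blast
  have symt: "transpose (Yf t) = Yf t" using spdt by (simp add: spd_def)
  obtain B where B: "B > 0" "\<And>(X::real^'n^'n) (Y::real^'n^'n). norm (X ** Y) \<le> norm X * norm Y * B"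
    using mm_bound by blast
  define d where "d = c / (2 * (\<bar>C1\<bar> * B + 1))"
  have d: "d > 0" unfolding d_def using c(1) B(1) by (intro divide_pos_pos mult_pos_pos add_nonneg_pos) auto
  define C3 where "C3 = 2 * (norm (Qf t) * C2 * B + norm W * \<bar>C1\<bar> * B) / c"
  have "norm (Qf s - Qf t - (s - t) *\<^sub>R W) \<le> C3 * (s - t)^2" if s: "s \<in> S" "\<bar>s - t\<bar> < d" for s
  proof -
    define e where "e = s - t"
    define D where "D = Yf s - Yf t"
    define E where "E = D - e *\<^sub>R Z"
    define F where "F = Qf s - Qf t - e *\<^sub>R W"
    have D1s: "norm D \<le> \<bar>C1\<bar> * \<bar>e\<bar>" using D1 s(1)
      by (simp add: D_def e_def) (meson abs_ge_self abs_ge_zero mult_right_mono order_trans)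
    have E2s: "norm E \<le> C2 * e^2" using E2 s(1) by (simp add: E_def D_def e_def)
    have FY1: "F ** Yf s = - (Qf t ** E) - e *\<^sub>R (W ** D)"
    proof -
      have ys: "Yf s = Yf t + D" by (simp add: D_def)
      have "F ** Yf s = Qf s ** Yf s - Qf t ** Yf s - e *\<^sub>R (W ** Yf s)"
        by (simp add: F_def mm_simps)
      also have "Qf s ** Yf s = A0 + e *\<^sub>R Ad" using QY s(1) by (simp add: e_def)
      also have "Qf t ** Yf s = A0 + Qf t ** D" by (simp add: ys mm_simps QYt)
      also have "W ** Yf s = W ** Yf t + W ** D" by (simp add: ys mm_simps)
      also have "Ad = Qf t ** Z + W ** Yf t" by (rule Ad)
      also have "Qf t ** D = Qf t ** E + e *\<^sub>R (Qf t ** Z)" by (simp add: E_def mm_simps)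
      finally show ?thesis by (simp add: algebra_simps)
    qed
    have FY: "F ** Yf t = F ** Yf s - F ** D" by (simp add: D_def mm_simps)
    have ee: "\<bar>e\<bar> * (\<bar>e\<bar> * x) = e * (e * x)" for x by (metis abs_mult_self_eq mult.assoc)
    have "c * norm F \<le> norm (0 ** F + F ** Yf t)"
      by (rule key_norm[OF _ c(2) symt]) simp
    also have "\<dots> = norm (- (Qf t ** E) - e *\<^sub>R (W ** D) - F ** D)" by (simp add: FY FY1)
    also have "\<dots> \<le> norm (Qf t) * norm E * B + \<bar>e\<bar> * (norm W * norm D * B) + norm F * norm D * B"
    proof -
      have a: "norm (- (Qf t ** E) - e *\<^sub>R (W ** D) - F ** D) \<le> norm (- (Qf t ** E) - e *\<^sub>R (W ** D)) + norm (F ** D)"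
        by (rule norm_triangle_ineq4)
      have b: "norm (- (Qf t ** E) - e *\<^sub>R (W ** D)) \<le> norm (- (Qf t ** E)) + norm (e *\<^sub>R (W ** D))"
        by (rule norm_triangle_ineq4)
      have c1: "norm (Qf t ** E) \<le> norm (Qf t) * norm E * B" by (rule B(2))
      have c2: "\<bar>e\<bar> * norm (W ** D) \<le> \<bar>e\<bar> * (norm W * norm D * B)" by (rule mult_left_mono[OF B(2)]) simp
      have c3: "norm (F ** D) \<le> norm F * norm D * B" by (rule B(2))
      show ?thesis using a b c1 c2 c3 by simp
    qed
    also have "\<dots> \<le> norm (Qf t) * (C2 * e^2) * B + \<bar>e\<bar> * (norm W * (\<bar>C1\<bar> * \<bar>e\<bar>) * B) + norm F * (\<bar>C1\<bar> * \<bar>e\<bar>) * B"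
      using E2s D1s B(1)
      by (intro add_mono mult_right_mono mult_left_mono) auto
    finally have 1: "c * norm F \<le> e^2 * (norm (Qf t) * C2 * B + norm W * \<bar>C1\<bar> * B) + norm F * (\<bar>C1\<bar> * B * \<bar>e\<bar>)"
      by (simp add: power2_eq_square algebra_simps ee)
    have "\<bar>C1\<bar> * B * \<bar>e\<bar> \<le> c / 2"
    proof -
      have "\<bar>e\<bar> < d" using s(2) by (simp add: e_def)
      then have "(\<bar>C1\<bar> * B + 1) * \<bar>e\<bar> \<le> (\<bar>C1\<bar> * B + 1) * d"
        using B(1) by (intro mult_left_mono) (auto simp: add_pos_nonneg)
      also have "\<dots> = c / 2"
      proof -
        have "\<bar>C1\<bar> * B + 1 > 0" using B(1) by (simp add: add_nonneg_pos)
        moreover have "q * (c / (2 * q)) = c / 2" if "q > 0" for q :: real using that by simp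
        ultimately show ?thesis unfolding d_def by blast
      qed
      finally have "(\<bar>C1\<bar> * B + 1) * \<bar>e\<bar> \<le> c / 2" .
      moreover have "\<bar>C1\<bar> * B * \<bar>e\<bar> \<le> (\<bar>C1\<bar> * B + 1) * \<bar>e\<bar>" by (simp add: algebra_simps)
      ultimately show ?thesis by linarith
    qed
    then have "norm F * (\<bar>C1\<bar> * B * \<bar>e\<bar>) \<le> norm F * (c / 2)" by (rule mult_left_mono) simp
    with 1 have "(c/2) * norm F \<le> e^2 * (norm (Qf t) * C2 * B + norm W * \<bar>C1\<bar> * B)"
      by (simp add: mult.commute[of c "norm F"])
    then have "norm F \<le> (e^2 * (norm (Qf t) * C2 * B + norm W * \<bar>C1\<bar> * B)) / (c/2)"
      using c(1) by (subst pos_le_divide_eq) (auto simp: mult.commute)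
    also have "\<dots> = C3 * e^2" using c(1) by (simp add: C3_def field_simps)
    finally have "norm F \<le> C3 * e^2" .
    then show ?thesis by (simp add: F_def e_def)
  qed
  then show ?thesis using d by blast
qed


lemma inner_transpose_mv: "x \<bullet> (transpose U *v y) = (U *v x) \<bullet> (y::real^'n)"
  for U :: "real^'n^'n"
  by (metis dot_lmul_matrix inner_commute transpose_matrix_vector)

lemma orth_commute:
  fixes U Y :: "real^'n^'n"
  assumes U1: "transpose U ** U = mat 1" and U2: "U ** transpose U = mat 1"
    and Y: "spd Y" and conj: "transpose U ** (Y ** Y) ** U = Y ** Y"
  shows "Y ** U = U ** Y"
proof -
  define Y' where "Y' = transpose U ** Y ** U"
  have symY: "transpose Y = Y" using Y by (simp add: spd_def)
  have "spd Y'"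
    unfolding spd_def
  proof (intro conjI allI impI)
    show "transpose Y' = Y'" by (simp add: Y'_def matrix_transpose_mul symY matrix_mul_assoc)
    fix x :: "real^'n" assume x: "x \<noteq> 0"
    have "U *v x \<noteq> 0"
    proof
      assume "U *v x = 0"
      then have "transpose U *v (U *v x) = 0" by simp
      then show False using x U1 by (simp add: matrix_vector_mul_assoc)
    qed
    then have "0 < (U *v x) \<bullet> (Y *v (U *v x))" using Y by (simp add: spd_def)
    also have "(U *v x) \<bullet> (Y *v (U *v x)) = x \<bullet> (transpose U *v (Y *v (U *v x)))"
      by (rule inner_transpose_mv[symmetric])
    also have "\<dots> = x \<bullet> (Y' *v x)" by (simp only: Y'_def matrix_vector_mul_assoc matrix_mul_assoc)
    finally show "0 < x \<bullet> (Y' *v x)" .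
  qed
  moreover have "Y' ** Y' = Y ** Y"
  proof -
    have "Y' ** Y' = transpose U ** Y ** (U ** transpose U) ** Y ** U"
      by (simp add: Y'_def matrix_mul_assoc)
    also have "\<dots> = transpose U ** (Y ** Y) ** U" by (simp add: U2 matrix_mul_assoc)
    finally show ?thesis using conj by simp
  qed
  ultimately have "Y' = Y" using Y sqrt_unique by blast
  then have "U ** Y' = U ** Y" by simp
  then show ?thesis by (simp add: Y'_def matrix_mul_assoc U2)
qed

lemma cancel_left:
  fixes L M X1 X2 :: "real^'n^'n"
  assumes "L ** M = mat 1" "M ** X1 = M ** X2"
  shows "X1 = X2"
  by (metis assms matrix_mul_assoc matrix_mul_lid)


theorem lemma3p1:
  fixes R0 R1 :: "real^'n^'n" and h :: real
    and A Q Y :: "real \<Rightarrow> real^'n^'n"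
  assumes "R0 \<in> SO" and "R1 \<in> SO" and "h > 0"
    and A_def: "\<And>t. A t = ((h - t) / h) *\<^sub>R R0 + (t / h) *\<^sub>R R1"
    and nonsing: "\<And>t. t \<in> {0..h} \<Longrightarrow> invertible (A t)"
    and polar: "\<And>t. t \<in> {0..h} \<Longrightarrow>
                  A t = Q t ** Y t \<and> orthogonal_matrix (Q t) \<and> spd (Y t)"
  shows "\<forall>t \<in> {0..h}.
           (Y has_vector_derivative
              (Y t ** msym (matrix_inv (A t) ** vector_derivative A (at t within {0..h}))))
              (at t within {0..h})
         \<and> (Q has_vector_derivative
              (Q t ** mskew (matrix_inv (A t) ** vector_derivative A (at t within {0..h}))))
              (at t within {0..h})"
proof
  fix t assume t: "t \<in> {0..h}"
  have h: "h > 0" by fact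
  have o0: "transpose R0 ** R0 = mat 1" "R0 ** transpose R0 = mat 1"
    using assms(1) by (auto simp: SO_def orthogonal_matrix_def)
  have o1: "transpose R1 ** R1 = mat 1" "R1 ** transpose R1 = mat 1"
    using assms(2) by (auto simp: SO_def orthogonal_matrix_def)
  define R where "R = transpose R0 ** R1"
  have RtR: "transpose R ** R = mat 1"
  proof -
    have "transpose R ** R = transpose R1 ** (R0 ** transpose R0) ** R1"
      by (simp add: R_def matrix_transpose_mul matrix_mul_assoc)
    then show ?thesis by (simp add: o0 o1)
  qed
  have RRt: "R ** transpose R = mat 1"
  proof -
    have "R ** transpose R = transpose R0 ** (R1 ** transpose R1) ** R0"
      by (simp add: R_def matrix_transpose_mul matrix_mul_assoc)
    then show ?thesis by (simp add: o0 o1)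
  qed
  have R0R: "R0 ** R = R1" by (simp add: R_def matrix_mul_assoc o0)
  define M where "M s = ((h - s) / h) *\<^sub>R mat 1 + (s / h) *\<^sub>R R" for s
  have AM: "A s = R0 ** M s" for s by (simp add: A_def M_def mm_simps R0R)
  define Ad where "Ad = (1 / h) *\<^sub>R (R1 - R0)"
  define K where "K = (1 / h) *\<^sub>R (R - mat 1)"
  have AdK: "Ad = R0 ** K" by (simp add: Ad_def K_def mm_simps R0R)
  have Alin: "A s = A t + (s - t) *\<^sub>R Ad" for s
    unfolding A_def Ad_def using h by (simp add: vec_eq_iff) (simp add: field_simps)
  have vd: "vector_derivative A (at t within {0..h}) = Ad"
  proof (rule vector_derivative_within_closed_interval[OF h t])
    show "(A has_vector_derivative Ad) (at t within {0..h})"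
    proof (rule deriv_from_bound[where d=1 and C=0])
      show "\<forall>s\<in>{0..h}. \<bar>s - t\<bar> < 1 \<longrightarrow> norm (A s - A t - (s - t) *\<^sub>R Ad) \<le> 0 * (s - t)\<^sup>2"
      proof (intro ballI impI)
        fix s show "norm (A s - A t - (s - t) *\<^sub>R Ad) \<le> 0 * (s - t)\<^sup>2" by (simp only: Alin[of s]) simp
      qed
    qed simp
  qed
  have RM: "R ** M s = M s ** R" for s by (simp add: M_def mm_simps)
  have RMt: "R ** transpose (M s) = transpose (M s) ** R" for s
    by (simp add: M_def mm_simps RRt RtR)
  define G where "G s = transpose (A s) ** A s" for s
  have GM: "G s = transpose (M s) ** M s" for s
  proof -
    have "G s = transpose (M s) ** (transpose R0 ** R0) ** M s"
      by (simp add: G_def AM matrix_transpose_mul matrix_mul_assoc)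
    then show ?thesis by (simp add: o0)
  qed
  have GY: "Y s ** Y s = G s" if "s \<in> {0..h}" for s
  proof -
    have p: "A s = Q s ** Y s" "transpose (Q s) ** Q s = mat 1" "transpose (Y s) = Y s"
      using polar[OF that] by (auto simp: orthogonal_matrix_def spd_def)
    have "G s = transpose (Y s) ** (transpose (Q s) ** Q s) ** Y s"
      by (simp add: G_def p(1) matrix_transpose_mul matrix_mul_assoc)
    then show ?thesis by (simp add: p)
  qed
  have spdY: "spd (Y s)" if "s \<in> {0..h}" for s using polar[OF that] by blast
  have symY: "transpose (Y t) = Y t" using spdY[OF t] by (simp add: spd_def)
  have RGR: "transpose R ** G t ** R = G t"
  proof -
    have "transpose R ** G t ** R = transpose R ** transpose (M t) ** (M t ** R)"
      by (simp add: GM matrix_mul_assoc)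
    also have "\<dots> = transpose R ** (transpose (M t) ** R) ** M t"
      by (simp add: RM[symmetric] matrix_mul_assoc)
    also have "\<dots> = (transpose R ** R) ** (transpose (M t) ** M t)"
      by (simp add: RMt[symmetric] matrix_mul_assoc)
    finally show ?thesis by (simp add: RtR GM)
  qed
  have YR: "Y t ** R = R ** Y t"
    by (rule orth_commute[OF RtR RRt spdY[OF t]]) (simp add: GY[OF t] RGR)
  have YRt: "Y t ** transpose R = transpose R ** Y t"
    using arg_cong[OF YR, of transpose] by (simp add: matrix_transpose_mul symY)
  have YK: "Y t ** K = K ** Y t" by (simp add: K_def mm_simps YR)
  have YM: "Y t ** M t = M t ** Y t" by (simp add: M_def mm_simps YR)
  define N where "N = matrix_inv (A t) ** Ad"
  have inv: "A t ** matrix_inv (A t) = mat 1" "matrix_inv (A t) ** A t = mat 1"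
    using inv_props[OF nonsing[OF t]] by auto
  have AN: "A t ** N = Ad" by (simp add: N_def matrix_mul_assoc inv)
  have MN: "M t ** N = K"
  proof -
    have "transpose R0 ** (A t ** N) = transpose R0 ** Ad" by (simp add: AN)
    then show ?thesis by (simp add: AM AdK matrix_mul_assoc o0)
  qed
  have LM: "(matrix_inv (A t) ** R0) ** M t = mat 1"
    by (simp add: matrix_mul_assoc[symmetric] AM[symmetric] inv)
  have YN: "Y t ** N = N ** Y t"
  proof (rule cancel_left[OF LM])
    have "M t ** (Y t ** N) = Y t ** (M t ** N)" by (simp add: matrix_mul_assoc YM)
    also have "\<dots> = K ** Y t" by (simp add: MN YK)
    also have "\<dots> = M t ** (N ** Y t)" by (simp add: matrix_mul_assoc MN)
    finally show "M t ** (Y t ** N) = M t ** (N ** Y t)" .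
  qed
  have YNt: "Y t ** transpose N = transpose N ** Y t"
    using arg_cong[OF YN, of transpose] by (simp add: matrix_transpose_mul symY)
  define S where "S = msym N"
  define Sk where "Sk = mskew N"
  define Z where "Z = Y t ** S"
  define W where "W = Q t ** Sk"
  define Gd where "Gd = transpose Ad ** A t + transpose (A t) ** Ad"
  define P where "P = transpose Ad ** Ad"
  have YS: "Y t ** S = S ** Y t" by (simp add: S_def msym_def mm_simps YN YNt)
  have YSk: "Y t ** Sk = Sk ** Y t" by (simp add: Sk_def mskew_def mm_simps YN YNt)
  have GN: "G t ** N = transpose (A t) ** Ad"
    by (simp add: G_def matrix_mul_assoc[symmetric] AN)
  have NG: "transpose N ** G t = transpose Ad ** A t"
  proof -
    have "transpose N ** G t = transpose Ad ** transpose (A t ** matrix_inv (A t)) ** A t"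
      by (simp add: N_def G_def matrix_transpose_mul matrix_mul_assoc)
    then show ?thesis by (simp add: inv)
  qed
  have lin: "Y t ** Z + Z ** Y t = Gd"
  proof -
    have "Y t ** Z + Z ** Y t = (1/2) *\<^sub>R (Y t ** Y t ** N + Y t ** Y t ** transpose N + Y t ** N ** Y t + Y t ** transpose N ** Y t)"
      by (simp add: Z_def S_def msym_def mm_simps matrix_mul_assoc algebra_simps)
    also have "Y t ** N ** Y t = Y t ** Y t ** N" by (metis YN matrix_mul_assoc)
    also have "Y t ** transpose N ** Y t = transpose N ** (Y t ** Y t)"
      by (metis YNt matrix_mul_assoc)
    also have "Y t ** Y t ** transpose N = transpose N ** (Y t ** Y t)"
      by (metis YNt matrix_mul_assoc)
    also have "(1/2) *\<^sub>R (Y t ** Y t ** N + transpose N ** (Y t ** Y t) + Y t ** Y t ** N + transpose N ** (Y t ** Y t)) = Gd"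
      unfolding GY[OF t] GN NG Gd_def by (simp add: vec_eq_iff algebra_simps)
    finally show ?thesis .
  qed
  have sq: "\<forall>s\<in>{0..h}. Y s ** Y s = Y t ** Y t + (s - t) *\<^sub>R Gd + (s - t)^2 *\<^sub>R P"
  proof
    fix s assume s: "s \<in> {0..h}"
    show "Y s ** Y s = Y t ** Y t + (s - t) *\<^sub>R Gd + (s - t)^2 *\<^sub>R P"
      unfolding GY[OF s] GY[OF t] G_def Gd_def P_def
      by (simp only: Alin[of s]) (simp add: mm_simps, simp add: vec_eq_iff power2_eq_square algebra_simps)
  qed
  have bnd: "\<forall>s\<in>{0..h}. \<bar>s - t\<bar> \<le> h" using t by auto
  obtain C1 C2 where C: "\<forall>s\<in>{0..h}. norm (Y s - Y t) \<le> C1 * \<bar>s - t\<bar>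
            \<and> norm (Y s - Y t - (s - t) *\<^sub>R Z) \<le> C2 * (s - t)^2"
    using Y_core[OF _ t sq lin bnd] spdY by blast
  have dY: "(Y has_vector_derivative Z) (at t within {0..h})"
    by (rule deriv_from_bound[of 1 _ _ _ _ C2]) (use C in auto)
  have SSk: "S + Sk = N" by (simp add: S_def Sk_def msym_def mskew_def scaleR_add_right[symmetric])
  have Ad_eq: "Ad = Q t ** Z + W ** Y t"
  proof -
    have "Q t ** Z + W ** Y t = Q t ** Y t ** (S + Sk)"
      by (simp add: Z_def W_def mm_simps matrix_mul_assoc) (metis YSk matrix_mul_assoc)
    also have "\<dots> = A t ** N" using polar[OF t] SSk by simp
    finally show ?thesis by (simp add: AN)
  qed
  have QY: "\<forall>s\<in>{0..h}. Q s ** Y s = A t + (s - t) *\<^sub>R Ad"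
    using polar Alin by (metis (no_types, lifting))
  have QYt: "Q t ** Y t = A t" using polar[OF t] by simp
  obtain C3 d where d: "d > 0" "\<forall>s\<in>{0..h}. \<bar>s - t\<bar> < d \<longrightarrow> norm (Q s - Q t - (s - t) *\<^sub>R W) \<le> C3 * (s - t)^2"
    using Q_core[OF spdY[OF t] QY QYt Ad_eq, of C1 C2] C by blast
  have dQ: "(Q has_vector_derivative W) (at t within {0..h})"
    by (rule deriv_from_bound[OF d])
  show "(Y has_vector_derivative
              (Y t ** msym (matrix_inv (A t) ** vector_derivative A (at t within {0..h}))))
              (at t within {0..h})
         \<and> (Q has_vector_derivative
              (Q t ** mskew (matrix_inv (A t) ** vector_derivative A (at t within {0..h}))))
              (at t within {0..h})"
    using dY dQ by (simp add: vd Z_def W_def S_def Sk_def N_def)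
qed

end
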